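(* Let $\mathcal{K}\subseteq\mathbb{R}^d$, let $f(x)=\mathbb{E}_\xi[f(x;\xi)]$ where for every realisation $\xi$ the function $f(\cdot;\xi):\mathbb{R}^d\to\mathbb{R}$ is differentiable with $\|\nabla f(x;\xi)-\nabla f(y;\xi)\|_2\le L\|x-y\|_2$ for all $x,y$, and $\mathbb{E}_\xi[\nabla f(x;\xi)]=\nabla f(x)$. Assume $\mathbb{E}_\xi[\|\nabla f(x)-\nabla f(x;\xi)\|_2^2]\le\sigma^2$ for all $x\in\mathcal{K}$. Let $\nu>0$, let $u=(u_1,\dots,u_d)$ with $u_1,\dots,u_d$ independent Rademacher random variables (independent of $\xi$), and define \[ g_\nu(x;\xi)=\frac{1}{\nu}\big(f(x+\nu u;\xi)-f(x;\xi)\big)u,\qquad \nabla f_\nu(x)=\mathbb{E}_u\Big[\frac{1}{\nu}\big(f(x+\nu u)-f(x)\big)u\Big]. \] Then for every $x\in\mathcal{K}$, \[ \mathbb{E}\big[\|g_\nu(x;\xi)-\nabla f_\nu(x)\|_\infty^2\big]\le \frac{3\nu^2d^2L^2}{2}+10\|\nabla f(x)\|_2^2+8\sigma^2 . \]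
   Context: A Rademacher random variable takes the values $+1$ and $-1$ with probability $1/2$ each. The expectation $\mathbb{E}$ is over both $u$ and $\xi$. *)

theory Defs
  imports "HOL-Probability.Probability"
begin

definition rad_vecs :: "(real ^ 'd) set" where
  "rad_vecs = {u. \<forall>i. u $ i = 1 \<or> u $ i = -1}"

text \<open>Expectation over u = (u_1,...,u_d) with independent Rademacher entries,
  i.e. the uniform average over the 2^d sign vectors.\<close>
definition rad_expect :: "(real ^ 'd \<Rightarrow> 'v::real_vector) \<Rightarrow> 'v" where
  "rad_expect h = (1 / 2 ^ CARD('d)) *\<^sub>R (\<Sum>u\<in>(rad_vecs :: (real ^ 'd) set). h u)"

definition linf_norm :: "real ^ 'd \<Rightarrow> real" where
  "linf_norm v = Max (range (\<lambda>i. \<bar>v $ i\<bar>))"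

end

theory Submission
  imports Defs
begin


locale ipsp =
  fixes V :: "('w \<Rightarrow> real) set" and \<Omega> :: "'w set"
    and ip :: "('w \<Rightarrow> real) \<Rightarrow> ('w \<Rightarrow> real) \<Rightarrow> real"
  assumes V_add: "Y \<in> V \<Longrightarrow> Z \<in> V \<Longrightarrow> (\<lambda>w. Y w + Z w) \<in> V"
    and V_scale: "Y \<in> V \<Longrightarrow> (\<lambda>w. c * Y w) \<in> V"
    and V_const: "(\<lambda>w. c) \<in> V"
    and V_abs: "Y \<in> V \<Longrightarrow> (\<lambda>w. \<bar>Y w\<bar>) \<in> V"
    and ip_add: "Y \<in> V \<Longrightarrow> Z \<in> V \<Longrightarrow> W \<in> V \<Longrightarrow> ip (\<lambda>w. Y w + Z w) W = ip Y W + ip Z W"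
    and ip_scale: "Y \<in> V \<Longrightarrow> W \<in> V \<Longrightarrow> ip (\<lambda>w. c * Y w) W = c * ip Y W"
    and ip_sym: "Y \<in> V \<Longrightarrow> Z \<in> V \<Longrightarrow> ip Y Z = ip Z Y"
    and ip_mono: "Y \<in> V \<Longrightarrow> Z \<in> V \<Longrightarrow> (\<And>w. w \<in> \<Omega> \<Longrightarrow> \<bar>Y w\<bar> \<le> \<bar>Z w\<bar>) \<Longrightarrow> ip Y Y \<le> ip Z Z"
    and ip_one: "ip (\<lambda>w. 1) (\<lambda>w. 1) = 1"
begin

lemma ip_add_r: assumes "Y \<in> V" "Z \<in> V" "W \<in> V" shows "ip W (\<lambda>w. Y w + Z w) = ip W Y + ip W Z"
proof -
  have "ip W (\<lambda>w. Y w + Z w) = ip (\<lambda>w. Y w + Z w) W" using ip_sym[OF assms(3) V_add[OF assms(1,2)]] .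
  also have "\<dots> = ip Y W + ip Z W" by (rule ip_add[OF assms])
  finally show ?thesis using ip_sym[OF assms(1,3)] ip_sym[OF assms(2,3)] by simp
qed

lemma ip_scale_r: assumes "Y \<in> V" "W \<in> V" shows "ip W (\<lambda>w. c * Y w) = c * ip W Y"
proof -
  have "ip W (\<lambda>w. c * Y w) = ip (\<lambda>w. c * Y w) W" using ip_sym[OF assms(2) V_scale[OF assms(1)]] .
  also have "\<dots> = c * ip Y W" by (rule ip_scale[OF assms])
  finally show ?thesis using ip_sym[OF assms] by simp
qed

lemma ip_nonneg: assumes "Y \<in> V" shows "0 \<le> ip Y Y"
proof -
  have z: "(\<lambda>w. 0::real) \<in> V" by (rule V_const)
  have "ip (\<lambda>w. 0 * Y w) Y = 0" using ip_scale[OF assms assms, of 0] by simp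
  hence a: "ip (\<lambda>w. 0) Y = 0" by simp
  have "ip (\<lambda>w. 0) (\<lambda>w. 0 * Y w) = 0 * ip (\<lambda>w. 0) Y" using ip_scale_r[OF assms z, of 0] .
  hence "ip (\<lambda>w. 0) (\<lambda>w. 0) = 0" by simp
  moreover have "ip (\<lambda>w. 0) (\<lambda>w. 0) \<le> ip Y Y" by (rule ip_mono[OF z assms]) simp
  ultimately show ?thesis by simp
qed

lemma ip_quad: assumes "Y \<in> V" "Z \<in> V"
  shows "ip (\<lambda>w. Y w + c * Z w) (\<lambda>w. Y w + c * Z w) = ip Y Y + 2 * c * ip Y Z + c^2 * ip Z Z"
proof -
  have cz: "(\<lambda>w. c * Z w) \<in> V" using V_scale assms by blast
  have s: "(\<lambda>w. Y w + c * Z w) \<in> V" using V_add assms cz by blast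
  have "ip (\<lambda>w. Y w + c * Z w) (\<lambda>w. Y w + c * Z w) = ip Y (\<lambda>w. Y w + c * Z w) + c * ip Z (\<lambda>w. Y w + c * Z w)"
    using ip_add[OF assms(1) cz s] ip_scale[OF assms(2) s] by simp
  also have "\<dots> = ip Y Y + c * ip Y Z + c * (ip Z Y + c * ip Z Z)"
    using ip_add_r[OF assms(1) cz assms(1)] ip_add_r[OF assms(1) cz assms(2)]
      ip_scale_r[OF assms(2) assms(1)] ip_scale_r[OF assms(2) assms(2)] by simp
  finally show ?thesis using ip_sym[OF assms] by (simp add: power2_eq_square algebra_simps)
qed

lemma quad_nonneg_disc:
  fixes A B C :: real
  assumes "\<And>c. 0 \<le> A + 2 * c * B + c^2 * C"
  shows "B^2 \<le> A * C"
proof (cases "C = 0")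
  case True
  have "B = 0"
  proof (rule ccontr)
    assume "B \<noteq> 0"
    have "0 \<le> A + 2 * (- (\<bar>A\<bar> + 1) / (2 * B)) * B + (- (\<bar>A\<bar> + 1) / (2 * B))^2 * C" by (rule assms)
    also have "\<dots> = A - (\<bar>A\<bar> + 1)" using \<open>B \<noteq> 0\<close> True by (simp add: field_simps)
    finally show False by linarith
  qed
  then show ?thesis using True assms[of 0] by simp
next
  case False
  have C: "C \<ge> 0"
  proof (rule ccontr)
    assume "\<not> C \<ge> 0"
    hence C: "C < 0" by simp
    define c where "c = (\<bar>A\<bar> + 2 * \<bar>B\<bar> + 1) / (- C) + 1"
    have c1: "c \<ge> 1" using C unfolding c_def by (simp add: divide_nonneg_neg)
    have "c * (- C) \<ge> \<bar>A\<bar> + 2 * \<bar>B\<bar> + 1" using C unfolding c_def by (simp add: field_simps)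
    hence "c * (\<bar>A\<bar> + 2 * \<bar>B\<bar> + 1) \<le> c * (c * (- C))" using c1 by (intro mult_left_mono) auto
    hence "c^2 * (- C) \<ge> c * (\<bar>A\<bar> + 2 * \<bar>B\<bar> + 1)" by (simp add: power2_eq_square algebra_simps)
    hence h0: "c^2 * C \<le> - (c * \<bar>A\<bar> + 2 * (c * \<bar>B\<bar>) + c)" by (simp add: algebra_simps)
    have "(c - 1) * \<bar>A\<bar> \<ge> 0" using c1 by simp
    hence h1: "A \<le> c * \<bar>A\<bar>" by (simp add: algebra_simps)
    have h2: "c * B \<le> c * \<bar>B\<bar>" using c1 by (intro mult_left_mono) auto
    have "A + 2 * (c * B) + c^2 * C < 0" using h0 h1 h2 c1 by linarith
    hence "A + 2 * c * B + c^2 * C < 0" by (simp add: algebra_simps)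
    with assms[of c] show False by simp
  qed
  with False have Cp: "C > 0" by simp
  have "0 \<le> A + 2 * (-B/C) * B + (-B/C)^2 * C" by (rule assms)
  also have "\<dots> = A - B^2 / C" using Cp by (simp add: field_simps power2_eq_square)
  finally show ?thesis using Cp by (simp add: field_simps)
qed

lemma ip_cs: assumes "Y \<in> V" "Z \<in> V" shows "(ip Y Z)^2 \<le> ip Y Y * ip Z Z"
proof (rule quad_nonneg_disc)
  fix c
  have "(\<lambda>w. Y w + c * Z w) \<in> V" using assms V_add V_scale by blast
  from ip_nonneg[OF this] show "0 \<le> ip Y Y + 2 * c * ip Y Z + c^2 * ip Z Z"
    using ip_quad[OF assms] by simp
qed

definition nrm where "nrm Y = sqrt (ip Y Y)"

lemma nrm_nonneg: "Y \<in> V \<Longrightarrow> 0 \<le> nrm Y" unfolding nrm_def using ip_nonneg by simp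

lemma nrm_sq: assumes "Y \<in> V" shows "(nrm Y)^2 = ip Y Y" unfolding nrm_def using ip_nonneg[OF assms] by simp

lemma nrm_add: assumes "Y \<in> V" "Z \<in> V" shows "nrm (\<lambda>w. Y w + Z w) \<le> nrm Y + nrm Z"
proof -
  have n: "0 \<le> nrm Y" "0 \<le> nrm Z" using nrm_nonneg assms by auto
  have q: "ip (\<lambda>w. Y w + 1 * Z w) (\<lambda>w. Y w + 1 * Z w) = ip Y Y + 2 * 1 * ip Y Z + 1^2 * ip Z Z"
    by (rule ip_quad[OF assms])
  have "ip Y Z \<le> nrm Y * nrm Z"
  proof -
    have "(ip Y Z)^2 \<le> (nrm Y * nrm Z)^2" using ip_cs[OF assms] nrm_sq[OF assms(1)] nrm_sq[OF assms(2)]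
      by (simp add: power_mult_distrib)
    hence "\<bar>ip Y Z\<bar> \<le> \<bar>nrm Y * nrm Z\<bar>" by (simp only: abs_le_square_iff)
    thus ?thesis using n by simp
  qed
  hence "ip (\<lambda>w. Y w + Z w) (\<lambda>w. Y w + Z w) \<le> (nrm Y + nrm Z)^2"
    using q nrm_sq[OF assms(1)] nrm_sq[OF assms(2)] by (simp add: power2_sum)
  hence "sqrt (ip (\<lambda>w. Y w + Z w) (\<lambda>w. Y w + Z w)) \<le> sqrt ((nrm Y + nrm Z)^2)"
    by (rule real_sqrt_le_mono)
  thus ?thesis unfolding nrm_def[of "\<lambda>w. Y w + Z w"] using n by simp
qed

lemma nrm_const: "nrm (\<lambda>w. c) = \<bar>c\<bar>"
proof -
  have o: "(\<lambda>w. 1::real) \<in> V" "(\<lambda>w. c * 1) \<in> V" using V_const by auto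
  have "ip (\<lambda>w. c * 1) (\<lambda>w. c * 1) = c * ip (\<lambda>w. 1) (\<lambda>w. c * 1)"
    by (rule ip_scale[OF o(1) o(2)])
  also have "\<dots> = c * (c * ip (\<lambda>w. 1) (\<lambda>w. 1))" using ip_scale_r[OF o(1) o(1), of c] by simp
  finally have "ip (\<lambda>w. c) (\<lambda>w. c) = c * c * ip (\<lambda>w. 1) (\<lambda>w. 1)" by simp
  thus ?thesis unfolding nrm_def using ip_one by simp
qed

lemma nrm_mono: "Y \<in> V \<Longrightarrow> Z \<in> V \<Longrightarrow> (\<And>w. w \<in> \<Omega> \<Longrightarrow> \<bar>Y w\<bar> \<le> \<bar>Z w\<bar>) \<Longrightarrow> nrm Y \<le> nrm Z"
  unfolding nrm_def using ip_mono by simp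

lemma nrm_abs: assumes "Y \<in> V" shows "nrm (\<lambda>w. \<bar>Y w\<bar>) = nrm Y"
proof -
  have a: "(\<lambda>w. \<bar>Y w\<bar>) \<in> V" using V_abs[OF assms] .
  have "nrm (\<lambda>w. \<bar>Y w\<bar>) \<le> nrm Y" by (rule nrm_mono[OF a assms]) simp
  moreover have "nrm Y \<le> nrm (\<lambda>w. \<bar>Y w\<bar>)" by (rule nrm_mono[OF assms a]) simp
  ultimately show ?thesis by simp
qed

lemma V_max: "Y \<in> V \<Longrightarrow> Z \<in> V \<Longrightarrow> (\<lambda>w. max (Y w) (Z w)) \<in> V"
proof -
  assume a: "Y \<in> V" "Z \<in> V"
  have "(\<lambda>w. (-1) * Z w) \<in> V" using V_scale a by blast
  hence "(\<lambda>w. Y w + (-1) * Z w) \<in> V" using V_add a by blast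
  hence "(\<lambda>w. \<bar>Y w + (-1) * Z w\<bar>) \<in> V" using V_abs by blast
  hence "(\<lambda>w. (Y w + Z w) + \<bar>Y w + (-1) * Z w\<bar>) \<in> V" using V_add a by blast
  hence "(\<lambda>w. (1/2) * ((Y w + Z w) + \<bar>Y w + (-1) * Z w\<bar>)) \<in> V" using V_scale by blast
  moreover have "(\<lambda>w. (1/2) * ((Y w + Z w) + \<bar>Y w + (-1) * Z w\<bar>)) = (\<lambda>w. max (Y w) (Z w))"
    by (auto simp: max_def)
  ultimately show ?thesis by simp
qed

lemma V_Max: assumes "finite A" "A \<noteq> {}" "\<And>i. i \<in> A \<Longrightarrow> F i \<in> V"
  shows "(\<lambda>w. Max ((\<lambda>i. F i w) ` A)) \<in> V"
  using assms
proof (induction A rule: finite_ne_induct)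
  case (singleton x)
  then show ?case by simp
next
  case (insert x A)
  have "(\<lambda>w. Max ((\<lambda>i. F i w) ` insert x A)) = (\<lambda>w. max (F x w) (Max ((\<lambda>i. F i w) ` A)))"
    using insert by (auto simp: Max_insert)
  then show ?case using insert V_max by simp
qed

end



lemma key_arith:
  fixes a r m s :: real
  assumes "0 \<le> a" "0 \<le> r" "0 \<le> m" "m^2 \<le> r^2" "a \<le> r + m"
    and "m > 21/25 * r \<Longrightarrow> a \<le> m + s \<and> 0 \<le> s \<and> s^2 \<le> 17/5 * (r^2 - m^2)"
  shows "a^2 \<le> 17/5 * r^2"
proof (cases "m \<le> 21/25 * r")
  case True
  hence "a \<le> 46/25 * r" using assms by linarith
  hence "a^2 \<le> (46/25 * r)^2" using assms by (intro power_mono) auto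
  moreover have "(46/25 * r)^2 = 2116/625 * r^2" by (simp add: power2_eq_square)
  moreover have "0 \<le> r^2" by simp
  ultimately show ?thesis by linarith
next
  case False
  hence m: "m > 21/25 * r" by simp
  with assms have s: "a \<le> m + s" "0 \<le> s" "s^2 \<le> 17/5 * (r^2 - m^2)" by auto
  show ?thesis
  proof (cases "a \<le> m")
    case True
    hence "a^2 \<le> m^2" using assms by (intro power_mono) auto
    moreover have "0 \<le> r^2" by simp
    ultimately show ?thesis using assms(4) by linarith
  next
    case False
    define t where "t = a - m"
    have t: "0 \<le> t" "t \<le> s" using False s unfolding t_def by auto
    have "t^2 \<le> s^2" using t by (intro power_mono) auto
    hence t2: "t^2 \<le> 17/5 * (r^2 - m^2)" using s by simp
    have "r^2 \<le> (m / (21/25))^2" using m assms by (intro power_mono) (auto simp: field_simps)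
    hence "r^2 \<le> m^2 * (625/441)" by (simp add: power_divide field_simps)
    hence e1: "r*r*441 \<le> m*m*625" by (simp add: power2_eq_square)
    have e2: "t*t*5 \<le> 17*(r*r) - 17*(m*m)" using t2 by (simp add: power2_eq_square)
    have e3: "0 \<le> m * m" by simp
    have "t*t*25 \<le> 36*(m*m)" using e1 e2 e3 by linarith
    hence "t^2 \<le> (6/5 * m)^2" by (simp add: power2_eq_square)
    hence "t \<le> 6/5 * m" using t assms by (simp add: power2_le_iff_abs_le)
    have "a^2 = m^2 + 2 * m * t + t^2" unfolding t_def by (simp add: power2_eq_square algebra_simps)
    also have "\<dots> \<le> m^2 + 2 * m * (6/5 * m) + 17/5 * (r^2 - m^2)"
      using \<open>t \<le> 6/5 * m\<close> t2 assms by (smt (verit) mult_left_mono)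
    also have "\<dots> = 17/5 * r^2" by (simp add: power2_eq_square field_simps)
    finally show ?thesis .
  qed
qed

locale ipsp_U = ipsp V \<Omega> ip
  for V :: "('w \<Rightarrow> real) set" and \<Omega> and ip +
  fixes U :: "'i \<Rightarrow> 'w \<Rightarrow> real" and I :: "'i set"
  assumes I_fin: "finite I" and I_ne: "I \<noteq> {}"
    and U_V: "i \<in> I \<Longrightarrow> U i \<in> V"
    and V_mulU: "i \<in> I \<Longrightarrow> Y \<in> V \<Longrightarrow> (\<lambda>w. U i w * Y w) \<in> V"
    and U_abs: "i \<in> I \<Longrightarrow> w \<in> \<Omega> \<Longrightarrow> \<bar>U i w\<bar> = 1"
    and ip_U: "i \<in> I \<Longrightarrow> k \<in> I \<Longrightarrow> ip (U i) (U k) = (if i = k then 1 else 0)"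
begin

definition TT where "TT X = (\<lambda>w. Max ((\<lambda>i. \<bar>U i w * X w - ip (U i) X\<bar>) ` I))"

lemma TT_V: assumes "X \<in> V" shows "TT X \<in> V"
  unfolding TT_def
proof (rule V_Max[OF I_fin I_ne])
  fix i assume i: "i \<in> I"
  have "(\<lambda>w. U i w * X w + (- ip (U i) X)) \<in> V" using V_mulU[OF i assms] V_const V_add by blast
  hence "(\<lambda>w. \<bar>U i w * X w + (- ip (U i) X)\<bar>) \<in> V" by (rule V_abs)
  thus "(\<lambda>w. \<bar>U i w * X w - ip (U i) X\<bar>) \<in> V" by simp
qed

lemma TT_ge: "i \<in> I \<Longrightarrow> \<bar>U i w * X w - ip (U i) X\<bar> \<le> TT X w"
  unfolding TT_def using I_fin by (intro Max_ge) auto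

lemma TT_le: "(\<And>i. i \<in> I \<Longrightarrow> \<bar>U i w * X w - ip (U i) X\<bar> \<le> c) \<Longrightarrow> TT X w \<le> c"
  unfolding TT_def using I_fin I_ne by (subst Max_le_iff) auto

lemma TT_nonneg: "0 \<le> TT X w"
proof -
  obtain i where "i \<in> I" using I_ne by blast
  from TT_ge[OF this, of w X] show ?thesis by (rule order_trans[OF abs_ge_zero])
qed

lemma key_ind:
  "\<And>X. X \<in> V \<Longrightarrow> card {i \<in> I. ip (U i) X \<noteq> 0} = n \<Longrightarrow> ip (TT X) (TT X) \<le> 17/5 * ip X X"
proof (induction n rule: less_induct)
  case (less n X)
  note XV = less.prems(1)
  obtain j where j: "j \<in> I" "\<And>i. i \<in> I \<Longrightarrow> \<bar>ip (U i) X\<bar> \<le> \<bar>ip (U j) X\<bar>"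
  proof -
    let ?A = "(\<lambda>i. \<bar>ip (U i) X\<bar>) ` I"
    have "Max ?A \<in> ?A" using I_fin I_ne by (intro Max_in) auto
    then obtain j where "j \<in> I" "Max ?A = \<bar>ip (U j) X\<bar>" by auto
    moreover have "\<And>i. i \<in> I \<Longrightarrow> \<bar>ip (U i) X\<bar> \<le> Max ?A" using I_fin by (intro Max_ge) auto
    ultimately show ?thesis using that by auto
  qed
  define \<mu> where "\<mu> = ip (U j) X"
  define m where "m = \<bar>\<mu>\<bar>"
  define q where "q = ip X X"
  define r where "r = nrm X"
  define a where "a = nrm (TT X)"
  have TXV: "TT X \<in> V" by (rule TT_V[OF XV])
  have r: "0 \<le> r" "r^2 = q" unfolding r_def q_def using nrm_nonneg nrm_sq XV by auto
  have a: "0 \<le> a" "a^2 = ip (TT X) (TT X)" unfolding a_def using nrm_nonneg nrm_sq TXV by auto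
  define Z where "Z = (\<lambda>w. X w + (- \<mu>) * U j w)"
  have ZV: "Z \<in> V" unfolding Z_def using V_add V_scale U_V j(1) XV by blast
  have qZ: "ip Z Z = q - \<mu>^2"
    unfolding Z_def q_def using ip_quad[OF XV U_V[OF j(1)], of "- \<mu>"] ip_U[OF j(1) j(1)]
      ip_sym[OF XV U_V[OF j(1)]] by (simp add: \<mu>_def power2_eq_square)
  have mr: "m^2 \<le> r^2" using ip_nonneg[OF ZV] qZ r unfolding m_def by simp
  have b1: "a \<le> r + m"
  proof -
    have absV: "(\<lambda>w. \<bar>X w\<bar> + m) \<in> V" using V_abs V_add V_const XV by blast
    have "a \<le> nrm (\<lambda>w. \<bar>X w\<bar> + m)" unfolding a_def
    proof (rule nrm_mono[OF TXV absV])
      fix w assume w: "w \<in> \<Omega>"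
      have "TT X w \<le> \<bar>X w\<bar> + m"
      proof (rule TT_le)
        fix i assume i: "i \<in> I"
        have "\<bar>U i w * X w - ip (U i) X\<bar> \<le> \<bar>U i w * X w\<bar> + \<bar>ip (U i) X\<bar>" by (rule abs_triangle_ineq4)
        also have "\<dots> \<le> \<bar>X w\<bar> + m" using U_abs[OF i w] j(2)[OF i] by (simp add: abs_mult m_def \<mu>_def)
        finally show "\<bar>U i w * X w - ip (U i) X\<bar> \<le> \<bar>X w\<bar> + m" .
      qed
      thus "\<bar>TT X w\<bar> \<le> \<bar>\<bar>X w\<bar> + m\<bar>" using TT_nonneg by simp
    qed
    also have "\<dots> \<le> nrm (\<lambda>w. \<bar>X w\<bar>) + nrm (\<lambda>w. m)" using nrm_add V_abs[OF XV] V_const by blast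
    also have "\<dots> = r + m" using nrm_abs[OF XV] nrm_const unfolding r_def m_def by simp
    finally show ?thesis .
  qed
  define s where "s = nrm (TT Z)"
  have TZV: "TT Z \<in> V" by (rule TT_V[OF ZV])
  have ipZ: "ip (U i) Z = ip (U i) X - \<mu> * ip (U i) (U j)" if i: "i \<in> I" for i
  proof -
    have "ip (U i) Z = ip (U i) X + ip (U i) (\<lambda>w. (- \<mu>) * U j w)"
      unfolding Z_def using ip_add_r[OF XV _ U_V[OF i]] V_scale U_V j(1) by blast
    also have "ip (U i) (\<lambda>w. (- \<mu>) * U j w) = (- \<mu>) * ip (U i) (U j)"
      using ip_scale_r[OF U_V[OF j(1)] U_V[OF i], of "- \<mu>"] by simp
    finally show ?thesis by simp
  qed
  have b2: "a \<le> m + s \<and> 0 \<le> s \<and> s^2 \<le> 17/5 * (r^2 - m^2)" if mpos: "m > 21/25 * r"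
  proof -
    have "m > 0" using mpos r by linarith
    hence mu0: "\<mu> \<noteq> 0" unfolding m_def by simp
    have setZ: "{i \<in> I. ip (U i) Z \<noteq> 0} = {i \<in> I. ip (U i) X \<noteq> 0} - {j}"
      using ipZ ip_U j(1) by (auto simp: \<mu>_def split: if_splits)
    have "card {i \<in> I. ip (U i) Z \<noteq> 0} < n"
      unfolding setZ less.prems(2)[symmetric] using I_fin j(1) mu0
      by (intro card_Diff1_less) (auto simp: \<mu>_def)
    from less.IH[OF this ZV refl] have IH: "ip (TT Z) (TT Z) \<le> 17/5 * ip Z Z" .
    have s0: "0 \<le> s" unfolding s_def using nrm_nonneg TZV by auto
    have s2: "s^2 \<le> 17/5 * (r^2 - m^2)" using IH nrm_sq[OF TZV] qZ r unfolding s_def m_def by simp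
    have mTV: "(\<lambda>w. m + TT Z w) \<in> V" using V_add V_const TZV by blast
    have "a \<le> nrm (\<lambda>w. m + TT Z w)" unfolding a_def
    proof (rule nrm_mono[OF TXV mTV])
      fix w assume w: "w \<in> \<Omega>"
      have "TT X w \<le> m + TT Z w"
      proof (rule TT_le)
        fix i assume i: "i \<in> I"
        have uj: "U j w * U j w = 1" 
        proof -
          have "U j w * U j w = \<bar>U j w\<bar> * \<bar>U j w\<bar>" by simp
          thus ?thesis using U_abs[OF j(1) w] by simp
        qed
        have Xw: "X w = Z w + \<mu> * U j w" unfolding Z_def by simp
        show "\<bar>U i w * X w - ip (U i) X\<bar> \<le> m + TT Z w"
        proof (cases "i = j")
          case True
          have "U i w * X w - ip (U i) X = U j w * Z w - ip (U j) Z"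
            using True Xw uj ipZ[OF j(1)] ip_U[OF j(1) j(1)] by (simp add: \<mu>_def algebra_simps)
          hence "\<bar>U i w * X w - ip (U i) X\<bar> \<le> TT Z w" using TT_ge[OF j(1)] by simp
          thus ?thesis using \<open>m > 0\<close> by simp
        next
          case False
          have "U i w * X w - ip (U i) X = (U i w * Z w - ip (U i) Z) + \<mu> * (U i w * U j w)"
            using False Xw ipZ[OF i] ip_U[OF i j(1)] by (simp add: algebra_simps)
          hence "\<bar>U i w * X w - ip (U i) X\<bar> \<le> \<bar>U i w * Z w - ip (U i) Z\<bar> + \<bar>\<mu> * (U i w * U j w)\<bar>"
            by (simp only: abs_triangle_ineq)
          also have "\<bar>\<mu> * (U i w * U j w)\<bar> = m" using U_abs[OF i w] U_abs[OF j(1) w] by (simp add: abs_mult m_def)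
          finally show ?thesis using TT_ge[OF i, of w Z] by simp
        qed
      qed
      thus "\<bar>TT X w\<bar> \<le> \<bar>m + TT Z w\<bar>" using TT_nonneg[of X w] TT_nonneg[of Z w] by simp
    qed
    also have "\<dots> \<le> nrm (\<lambda>w. m) + nrm (TT Z)" using nrm_add[OF V_const TZV] by simp
    also have "\<dots> = m + s" using nrm_const unfolding s_def m_def by simp
    finally show ?thesis using s0 s2 by simp
  qed
  have m0: "0 \<le> m" unfolding m_def by simp
  have "a^2 \<le> 17/5 * r^2" by (rule key_arith[OF a(1) r(1) m0 mr b1 b2])
  thus ?case using a r unfolding q_def by simp
qed

end


lemma vec_nth_rad: "vec_nth ` (rad_vecs :: (real^'d) set) = PiE UNIV (\<lambda>_. {1, -1::real})"
proof
  show "vec_nth ` rad_vecs \<subseteq> PiE UNIV (\<lambda>_. {1, -1::real})"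
    by (auto simp: rad_vecs_def PiE_iff)
next
  show "PiE UNIV (\<lambda>_. {1, -1::real}) \<subseteq> vec_nth ` (rad_vecs :: (real^'d) set)"
  proof
    fix g :: "'d \<Rightarrow> real" assume "g \<in> PiE UNIV (\<lambda>_. {1, -1::real})"
    hence "vec_lambda g \<in> (rad_vecs :: (real^'d) set)" by (auto simp: rad_vecs_def PiE_iff)
    moreover have "g = vec_nth (vec_lambda g)" by (rule ext) simp
    ultimately show "g \<in> vec_nth ` (rad_vecs :: (real^'d) set)" by blast
  qed
qed

lemma inj_vec_nth: "inj_on vec_nth A"
  by (rule inj_onI) (simp add: vec_eq_iff)

lemma finite_rad: "finite (rad_vecs :: (real^'d) set)"
proof -
  have "finite (vec_nth ` (rad_vecs :: (real^'d) set))" unfolding vec_nth_rad by (intro finite_PiE) auto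
  thus ?thesis using finite_imageD inj_vec_nth by blast
qed

lemma card_rad: "card (rad_vecs :: (real^'d) set) = 2 ^ CARD('d)"
proof -
  have "card (rad_vecs :: (real^'d) set) = card (vec_nth ` (rad_vecs :: (real^'d) set))"
    using card_image[OF inj_vec_nth] by metis
  also have "\<dots> = 2 ^ CARD('d)" unfolding vec_nth_rad by (simp add: card_PiE numeral_2_eq_2)
  finally show ?thesis .
qed

lemma rad_expect_real: "rad_expect (h :: real^'d \<Rightarrow> real) = (\<Sum>u\<in>rad_vecs. h u) / 2 ^ CARD('d)"
  unfolding rad_expect_def by simp

lemma rad_expect_add: "rad_expect (\<lambda>u. (f u :: real) + g u) = rad_expect f + rad_expect g"
  unfolding rad_expect_real by (simp add: sum.distrib add_divide_distrib)

lemma rad_expect_mult: "rad_expect (\<lambda>u. c * (f u :: real)) = c * rad_expect f"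
  unfolding rad_expect_real by (simp add: sum_distrib_left)

lemma rad_expect_const: "rad_expect (\<lambda>u::real^'d. c :: real) = c"
  unfolding rad_expect_real by (simp add: card_rad)

lemma rad_expect_cong: "(\<And>u. u \<in> rad_vecs \<Longrightarrow> f u = g u) \<Longrightarrow> rad_expect (f :: real^'d \<Rightarrow> real) = rad_expect g"
  unfolding rad_expect_real by (simp cong: sum.cong)

lemma rad_expect_mono: "(\<And>u. u \<in> rad_vecs \<Longrightarrow> f u \<le> g u) \<Longrightarrow> rad_expect (f :: real^'d \<Rightarrow> real) \<le> rad_expect g"
  unfolding rad_expect_real by (intro divide_right_mono sum_mono) auto

lemma rad_expect_sum: "finite A \<Longrightarrow> rad_expect (\<lambda>u. \<Sum>i\<in>A. (f i u :: real)) = (\<Sum>i\<in>A. rad_expect (f i))"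
  by (induction A rule: finite_induct) (simp_all add: rad_expect_add rad_expect_const)

lemma rad_expect_sum': "rad_expect (\<lambda>u. \<Sum>i\<in>A. (f i u :: real)) = (\<Sum>i\<in>A. rad_expect (f i))"
  by (cases "finite A") (simp_all add: rad_expect_sum rad_expect_const)

definition flipv :: "'d \<Rightarrow> real^'d \<Rightarrow> real^'d" where
  "flipv k u = (\<chi> i. if i = k then - u$i else u$i)"

lemma flipv_flipv: "flipv k (flipv k u) = u"
  unfolding flipv_def by (simp add: vec_eq_iff)

lemma flipv_rad: "u \<in> rad_vecs \<Longrightarrow> flipv k u \<in> rad_vecs"
  unfolding flipv_def rad_vecs_def by auto

lemma rad_cases: "u \<in> rad_vecs \<Longrightarrow> u$i = 1 \<or> u$i = -1"
  unfolding rad_vecs_def by simp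

lemma rad_entry: "u \<in> rad_vecs \<Longrightarrow> u$i * u$i = 1"
  using rad_cases[of u i] by auto

lemma rad_abs: "u \<in> rad_vecs \<Longrightarrow> \<bar>u$i\<bar> = 1"
  using rad_cases[of u i] by auto

lemma rad_uu: "rad_expect (\<lambda>u::real^'d. u$i * u$k) = (if i = k then 1 else 0)"
proof (cases "i = k")
  case True
  have "rad_expect (\<lambda>u::real^'d. u$i * u$k) = rad_expect (\<lambda>u::real^'d. 1)"
    using True by (intro rad_expect_cong) (simp add: rad_entry)
  then show ?thesis using True rad_expect_const by simp
next
  case False
  have "(\<Sum>u\<in>(rad_vecs::(real^'d) set). u$i * u$k) = (\<Sum>u\<in>(rad_vecs::(real^'d) set). (flipv k u)$i * (flipv k u)$k)"
    by (rule sum.reindex_bij_witness[where i = "flipv k" and j = "flipv k"])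
       (auto simp: flipv_flipv flipv_rad)
  also have "\<dots> = - (\<Sum>u\<in>(rad_vecs::(real^'d) set). u$i * u$k)"
    using False by (simp add: flipv_def sum_negf[symmetric])
  finally have "(\<Sum>u\<in>(rad_vecs::(real^'d) set). u$i * u$k) = 0" by simp
  then show ?thesis using False unfolding rad_expect_real by simp
qed

lemma rad_sq_inner: "rad_expect (\<lambda>u::real^'d. (a \<bullet> u)^2) = (norm a)^2"
proof -
  have "rad_expect (\<lambda>u::real^'d. (a \<bullet> u)^2) = rad_expect (\<lambda>u. \<Sum>i\<in>UNIV. \<Sum>k\<in>UNIV. (a$i * a$k) * (u$i * u$k))"
    by (intro rad_expect_cong) (simp add: inner_vec_def power2_eq_square sum_product algebra_simps)
  also have "\<dots> = (\<Sum>i\<in>UNIV. \<Sum>k\<in>UNIV. (a$i * a$k) * (if i = k then 1 else 0))"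
    by (simp add: rad_expect_sum' rad_expect_mult rad_uu)
  also have "\<dots> = (\<Sum>i\<in>UNIV. a$i * a$i)" by (simp add: if_distrib cong: if_cong)
  also have "\<dots> = (norm a)^2" by (simp add: power2_norm_eq_inner inner_vec_def)
  finally show ?thesis .
qed

lemma rad_norm_sq: "u \<in> rad_vecs \<Longrightarrow> (norm (u::real^'d))^2 = real CARD('d)"
  by (simp add: power2_norm_eq_inner inner_vec_def rad_entry)

lemma rad_expect_component: "rad_expect (h :: real^'d \<Rightarrow> real^'e) $ i = rad_expect (\<lambda>u. h u $ i)"
  unfolding rad_expect_def by simp



lemma line_deriv:
  fixes g :: "'a::real_inner \<Rightarrow> real"
  assumes "\<And>z. GDERIV g z :> G z"
  shows "((\<lambda>t. g (y + t *\<^sub>R v)) has_real_derivative (G (y + t *\<^sub>R v) \<bullet> v)) (at t)"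
proof -
  have l: "((\<lambda>t. y + t *\<^sub>R v) has_derivative (\<lambda>h. h *\<^sub>R v)) (at t)"
    by (auto intro!: derivative_eq_intros)
  have "((\<lambda>t. g (y + t *\<^sub>R v)) has_derivative (\<lambda>h. inner (h *\<^sub>R v) (G (y + t *\<^sub>R v)))) (at t)"
    using has_derivative_compose[OF l assms[of "y + t *\<^sub>R v", unfolded gderiv_def]] by simp
  moreover have "(\<lambda>h. inner (h *\<^sub>R v) (G (y + t *\<^sub>R v))) = (*) (G (y + t *\<^sub>R v) \<bullet> v)"
    by (rule ext) (simp add: inner_commute)
  ultimately show ?thesis by (simp add: has_field_derivative_def)
qed

lemma taylor_bound:
  fixes g :: "'a::real_inner \<Rightarrow> real"
  assumes d: "\<And>z. GDERIV g z :> G z" and lip: "\<And>y z. norm (G y - G z) \<le> L * norm (y - z)"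
  shows "\<bar>g (y + v) - g y - G y \<bullet> v\<bar> \<le> L / 2 * (norm v)^2"
proof -
  define c where "c = G y \<bullet> v"
  define n where "n = (norm v)^2"
  have dd: "\<bar>G (y + t *\<^sub>R v) \<bullet> v - c\<bar> \<le> L * t * n" if t: "0 \<le> t" for t
  proof -
    have "\<bar>G (y + t *\<^sub>R v) \<bullet> v - c\<bar> = \<bar>(G (y + t *\<^sub>R v) - G y) \<bullet> v\<bar>" unfolding c_def by (simp add: inner_diff_left)
    also have "\<dots> \<le> norm (G (y + t *\<^sub>R v) - G y) * norm v" by (rule Cauchy_Schwarz_ineq2)
    also have "\<dots> \<le> (L * norm (t *\<^sub>R v)) * norm v" using lip[of "y + t *\<^sub>R v" y] by (intro mult_right_mono) auto
    also have "\<dots> = L * t * n" using t unfolding n_def by (simp add: power2_eq_square)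
    finally show ?thesis .
  qed
  define qq where "qq t = g (y + t *\<^sub>R v) - t * c - L / 2 * t^2 * n" for t
  define pp where "pp t = g (y + t *\<^sub>R v) - t * c + L / 2 * t^2 * n" for t
  have "qq 1 \<le> qq 0"
  proof (rule DERIV_nonpos_imp_nonincreasing[of 0 1 qq])
    fix t :: real assume t: "0 \<le> t" "t \<le> 1"
    have "(qq has_real_derivative (G (y + t *\<^sub>R v) \<bullet> v - c - L * t * n)) (at t)"
      unfolding qq_def by (rule derivative_eq_intros line_deriv[OF d] | simp)+
    moreover have "G (y + t *\<^sub>R v) \<bullet> v - c - L * t * n \<le> 0" using dd[OF t(1)] by linarith
    ultimately show "\<exists>y. (qq has_real_derivative y) (at t) \<and> y \<le> 0" by blast
  qed simp
  moreover have "pp 0 \<le> pp 1"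
  proof (rule DERIV_nonneg_imp_nondecreasing[of 0 1 pp])
    fix t :: real assume t: "0 \<le> t" "t \<le> 1"
    have "(pp has_real_derivative (G (y + t *\<^sub>R v) \<bullet> v - c + L * t * n)) (at t)"
      unfolding pp_def by (rule derivative_eq_intros line_deriv[OF d] | simp)+
    moreover have "0 \<le> G (y + t *\<^sub>R v) \<bullet> v - c + L * t * n" using dd[OF t(1)] by linarith
    ultimately show "\<exists>y. (pp has_real_derivative y) (at t) \<and> 0 \<le> y" by blast
  qed simp
  ultimately have "g (y + v) - g y - c \<le> L / 2 * n" "- (L / 2 * n) \<le> g (y + v) - g y - c"
    unfolding qq_def pp_def by simp_all
  thus ?thesis unfolding c_def[symmetric] n_def[symmetric] by (subst abs_le_iff) linarith
qed



definition VV :: "'b measure \<Rightarrow> ('b \<times> (real^'d) \<Rightarrow> real) set" where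
  "VV M = {Y. \<forall>u\<in>rad_vecs. (\<lambda>\<xi>. Y (\<xi>, u)) \<in> borel_measurable M \<and> integrable M (\<lambda>\<xi>. (Y (\<xi>, u))^2)}"

definition IP :: "'b measure \<Rightarrow> ('b \<times> (real^'d) \<Rightarrow> real) \<Rightarrow> ('b \<times> (real^'d) \<Rightarrow> real) \<Rightarrow> real" where
  "IP M Y Z = rad_expect (\<lambda>u. \<integral>\<xi>. Y (\<xi>, u) * Z (\<xi>, u) \<partial>M)"

lemma VV_D: "Y \<in> VV M \<Longrightarrow> u \<in> rad_vecs \<Longrightarrow> (\<lambda>\<xi>. Y (\<xi>, u)) \<in> borel_measurable M"
  "Y \<in> VV M \<Longrightarrow> u \<in> rad_vecs \<Longrightarrow> integrable M (\<lambda>\<xi>. (Y (\<xi>, u))^2)"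
  unfolding VV_def by auto

lemma sq_bound_int:
  fixes F G :: "'a \<Rightarrow> real"
  assumes "integrable M F" "G \<in> borel_measurable M" "\<And>\<xi>. \<xi> \<in> space M \<Longrightarrow> \<bar>G \<xi>\<bar> \<le> F \<xi>"
  shows "integrable M G"
proof (rule Bochner_Integration.integrable_bound[OF assms(1) assms(2)])
  show "AE x in M. norm (G x) \<le> norm (F x)"
  proof (rule AE_I2)
    fix x assume "x \<in> space M"
    hence "\<bar>G x\<bar> \<le> F x" by (rule assms(3))
    also have "F x \<le> \<bar>F x\<bar>" by simp
    finally show "norm (G x) \<le> norm (F x)" by simp
  qed
qed

lemma VV_prod_int:
  assumes "Y \<in> VV M" "Z \<in> VV M" "u \<in> rad_vecs"
  shows "integrable M (\<lambda>\<xi>. Y (\<xi>, u) * Z (\<xi>, u))"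
proof (rule sq_bound_int[where F = "\<lambda>\<xi>. (Y (\<xi>, u))^2 + (Z (\<xi>, u))^2"])
  show "integrable M (\<lambda>\<xi>. (Y (\<xi>, u))^2 + (Z (\<xi>, u))^2)"
    by (rule Bochner_Integration.integrable_add[OF VV_D(2)[OF assms(1,3)] VV_D(2)[OF assms(2,3)]])
  show "(\<lambda>\<xi>. Y (\<xi>, u) * Z (\<xi>, u)) \<in> borel_measurable M"
    by (rule borel_measurable_times[OF VV_D(1)[OF assms(1,3)] VV_D(1)[OF assms(2,3)]])
  fix \<xi>
  define p where "p = \<bar>Y (\<xi>, u)\<bar>"
  define q where "q = \<bar>Z (\<xi>, u)\<bar>"
  have "0 \<le> (p - q)^2" by simp
  hence "2 * (p * q) \<le> p^2 + q^2" by (simp add: power2_eq_square algebra_simps)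
  moreover have "0 \<le> p * q" unfolding p_def q_def by simp
  moreover have "p^2 = (Y (\<xi>, u))^2" "q^2 = (Z (\<xi>, u))^2" unfolding p_def q_def by simp_all
  moreover have "\<bar>Y (\<xi>, u) * Z (\<xi>, u)\<bar> = p * q" unfolding p_def q_def by (simp add: abs_mult)
  ultimately show "\<bar>Y (\<xi>, u) * Z (\<xi>, u)\<bar> \<le> (Y (\<xi>, u))^2 + (Z (\<xi>, u))^2" by linarith
qed

lemma conc:
  assumes P: "prob_space M"
  shows "ipsp_U (VV M :: ('b \<times> (real^'d) \<Rightarrow> real) set) (space M \<times> rad_vecs) (IP M) (\<lambda>i w. snd w $ i) (UNIV :: 'd set)"
proof -
  interpret P: prob_space M by (rule P)
  show ?thesis
  proof (unfold_locales)
    fix Y Z :: "'b \<times> (real^'d) \<Rightarrow> real"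
    assume a: "Y \<in> VV M" "Z \<in> VV M"
    show "(\<lambda>w. Y w + Z w) \<in> VV M" unfolding VV_def
    proof (intro CollectI ballI conjI)
      fix u :: "real^'d" assume u: "u \<in> rad_vecs"
      show m: "(\<lambda>\<xi>. Y (\<xi>, u) + Z (\<xi>, u)) \<in> borel_measurable M"
        by (rule borel_measurable_add[OF VV_D(1)[OF a(1) u] VV_D(1)[OF a(2) u]])
      show "integrable M (\<lambda>\<xi>. (Y (\<xi>, u) + Z (\<xi>, u))^2)"
      proof (rule sq_bound_int[where F = "\<lambda>\<xi>. 2 * (Y (\<xi>, u))^2 + 2 * (Z (\<xi>, u))^2"])
        show "integrable M (\<lambda>\<xi>. 2 * (Y (\<xi>, u))^2 + 2 * (Z (\<xi>, u))^2)"
          by (rule Bochner_Integration.integrable_add; rule integrable_mult_right; rule VV_D(2)) (auto simp: a u)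
        show "(\<lambda>\<xi>. (Y (\<xi>, u) + Z (\<xi>, u))^2) \<in> borel_measurable M"
          unfolding power2_eq_square by (rule borel_measurable_times[OF m m])
        fix \<xi>
        have "0 \<le> (Y (\<xi>, u) - Z (\<xi>, u))^2" by simp
        hence "(Y (\<xi>, u) + Z (\<xi>, u))^2 \<le> 2 * (Y (\<xi>, u))^2 + 2 * (Z (\<xi>, u))^2"
          by (simp add: power2_eq_square algebra_simps)
        thus "\<bar>(Y (\<xi>, u) + Z (\<xi>, u))^2\<bar> \<le> 2 * (Y (\<xi>, u))^2 + 2 * (Z (\<xi>, u))^2"
          by simp
      qed
    qed
  next
    fix Y :: "'b \<times> (real^'d) \<Rightarrow> real" and c :: real
    assume a: "Y \<in> VV M"
    show "(\<lambda>w. c * Y w) \<in> VV M" unfolding VV_def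
    proof (intro CollectI ballI conjI)
      fix u :: "real^'d" assume u: "u \<in> rad_vecs"
      show "(\<lambda>\<xi>. c * Y (\<xi>, u)) \<in> borel_measurable M"
        by (rule borel_measurable_times[OF borel_measurable_const VV_D(1)[OF a u]])
      have "(\<lambda>\<xi>. (c * Y (\<xi>, u))^2) = (\<lambda>\<xi>. c^2 * (Y (\<xi>, u))^2)" by (simp add: power_mult_distrib)
      thus "integrable M (\<lambda>\<xi>. (c * Y (\<xi>, u))^2)"
        using integrable_mult_right[OF VV_D(2)[OF a u], of "c^2"] by simp
    qed
  next
    fix c :: real
    show "(\<lambda>w::'b \<times> (real^'d). c) \<in> VV M" unfolding VV_def
      using P.integrable_const[of "c^2"] by simp
  next
    fix Y :: "'b \<times> (real^'d) \<Rightarrow> real"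
    assume a: "Y \<in> VV M"
    show "(\<lambda>w. \<bar>Y w\<bar>) \<in> VV M" unfolding VV_def
    proof (intro CollectI ballI conjI)
      fix u :: "real^'d" assume u: "u \<in> rad_vecs"
      show "(\<lambda>\<xi>. \<bar>Y (\<xi>, u)\<bar>) \<in> borel_measurable M"
        by (rule borel_measurable_abs[OF VV_D(1)[OF a u]])
      show "integrable M (\<lambda>\<xi>. \<bar>Y (\<xi>, u)\<bar>^2)" using VV_D(2)[OF a u] by simp
    qed
  next
    fix Y Z W :: "'b \<times> (real^'d) \<Rightarrow> real"
    assume a: "Y \<in> VV M" "Z \<in> VV M" "W \<in> VV M"
    show "IP M (\<lambda>w. Y w + Z w) W = IP M Y W + IP M Z W"
      unfolding IP_def rad_expect_add[symmetric]
      by (intro rad_expect_cong) (simp add: distrib_right VV_prod_int a)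
  next
    fix Y W :: "'b \<times> (real^'d) \<Rightarrow> real" and c :: real
    show "IP M (\<lambda>w. c * Y w) W = c * IP M Y W"
      unfolding IP_def rad_expect_mult[symmetric] by (simp add: mult.assoc)
  next
    fix Y Z :: "'b \<times> (real^'d) \<Rightarrow> real"
    show "IP M Y Z = IP M Z Y" unfolding IP_def by (simp add: mult.commute)
  next
    fix Y Z :: "'b \<times> (real^'d) \<Rightarrow> real"
    assume a: "Y \<in> VV M" "Z \<in> VV M" and le: "\<And>w. w \<in> space M \<times> rad_vecs \<Longrightarrow> \<bar>Y w\<bar> \<le> \<bar>Z w\<bar>"
    show "IP M Y Y \<le> IP M Z Z" unfolding IP_def
    proof (rule rad_expect_mono)
      fix u :: "real^'d" assume u: "u \<in> rad_vecs"
      show "(\<integral>\<xi>. Y (\<xi>, u) * Y (\<xi>, u) \<partial>M) \<le> (\<integral>\<xi>. Z (\<xi>, u) * Z (\<xi>, u) \<partial>M)"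
      proof (rule integral_mono)
        show "integrable M (\<lambda>\<xi>. Y (\<xi>, u) * Y (\<xi>, u))" by (rule VV_prod_int[OF a(1) a(1) u])
        show "integrable M (\<lambda>\<xi>. Z (\<xi>, u) * Z (\<xi>, u))" by (rule VV_prod_int[OF a(2) a(2) u])
        fix \<xi> assume x: "\<xi> \<in> space M"
        have "(\<xi>, u) \<in> space M \<times> rad_vecs" using x u by simp
        hence "\<bar>Y (\<xi>, u)\<bar> \<le> \<bar>Z (\<xi>, u)\<bar>" by (rule le)
        hence "(Y (\<xi>, u))^2 \<le> (Z (\<xi>, u))^2" by (simp only: abs_le_square_iff)
        thus "Y (\<xi>, u) * Y (\<xi>, u) \<le> Z (\<xi>, u) * Z (\<xi>, u)" by (simp add: power2_eq_square)
      qed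
    qed
  next
    show "IP M (\<lambda>w. 1) (\<lambda>w. 1) = 1" unfolding IP_def by (simp add: rad_expect_const P.prob_space)
  next
    show "finite (UNIV :: 'd set)" by simp
  next
    show "(UNIV :: 'd set) \<noteq> {}" by simp
  next
    fix i :: 'd
    show "(\<lambda>w. snd w $ i) \<in> VV M" unfolding VV_def
    proof (intro CollectI ballI conjI)
      fix u :: "real^'d"
      show "(\<lambda>\<xi>. snd (\<xi>, u) $ i) \<in> borel_measurable M" by simp
      show "integrable M (\<lambda>\<xi>. (snd (\<xi>, u) $ i)^2)" using P.integrable_const[of "(u$i)^2"] by simp
    qed
  next
    fix i :: 'd and Y :: "'b \<times> (real^'d) \<Rightarrow> real"
    assume a: "Y \<in> VV M"
    show "(\<lambda>w. snd w $ i * Y w) \<in> VV M" unfolding VV_def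
    proof (intro CollectI ballI conjI)
      fix u :: "real^'d" assume u: "u \<in> rad_vecs"
      show "(\<lambda>\<xi>. snd (\<xi>, u) $ i * Y (\<xi>, u)) \<in> borel_measurable M"
        using borel_measurable_times[OF borel_measurable_const VV_D(1)[OF a u], of "u$i"] by simp
      have "(\<lambda>\<xi>. (snd (\<xi>, u) $ i * Y (\<xi>, u))^2) = (\<lambda>\<xi>. (Y (\<xi>, u))^2)"
      proof -
        have "(u$i)^2 = 1" using rad_entry[OF u, of i] by (simp add: power2_eq_square)
        thus ?thesis by (simp add: power_mult_distrib)
      qed
      thus "integrable M (\<lambda>\<xi>. (snd (\<xi>, u) $ i * Y (\<xi>, u))^2)" using VV_D[OF a u] by simp
    qed
  next
    fix i :: 'd and w :: "'b \<times> (real^'d)"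
    assume "w \<in> space M \<times> rad_vecs"
    hence "snd w \<in> rad_vecs" by (simp add: mem_Times_iff)
    thus "\<bar>snd w $ i\<bar> = 1" by (rule rad_abs)
  next
    fix i k :: 'd
    show "IP M (\<lambda>w. snd w $ i) (\<lambda>w. snd w $ k) = (if i = k then 1 else 0)"
      unfolding IP_def by (simp add: P.prob_space rad_uu)
  qed
qed

lemma int_rad:
  assumes "\<And>u. u \<in> rad_vecs \<Longrightarrow> integrable M (\<lambda>\<xi>. h \<xi> u)"
  shows "integrable M (\<lambda>\<xi>. rad_expect (\<lambda>u::real^'d. h \<xi> u :: real))"
    "(\<integral>\<xi>. rad_expect (\<lambda>u::real^'d. h \<xi> u :: real) \<partial>M) = rad_expect (\<lambda>u. \<integral>\<xi>. h \<xi> u \<partial>M)"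
  using assms unfolding rad_expect_real by (auto simp: integral_sum)



lemma sq_split:
  fixes p q K :: real
  assumes "\<bar>p - q\<bar> \<le> K"
  shows "p^2 \<le> 30/13 * q^2 + 30/17 * K^2"
proof -
  define e where "e = p - q"
  have "e^2 \<le> K^2" using assms unfolding e_def by (metis abs_le_square_iff abs_of_nonneg abs_ge_zero order_trans abs_abs)
  have id: "30/13 * q^2 + 30/17 * e^2 - (q + e)^2 = 13/17 * (17/13 * q - e)^2"
    by (simp add: power2_eq_square field_simps)
  have "0 \<le> 13/17 * (17/13 * q - e)^2" by simp
  hence "(q + e)^2 \<le> 30/13 * q^2 + 30/17 * e^2" using id by linarith
  moreover have "p = q + e" unfolding e_def by simp
  ultimately show ?thesis using \<open>e^2 \<le> K^2\<close> by simp
qed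

theorem lemma3:
  fixes M :: "'b measure"
    and f :: "real ^ 'd \<Rightarrow> 'b \<Rightarrow> real"
    and gf :: "'b \<Rightarrow> real ^ 'd \<Rightarrow> real ^ 'd"
    and F :: "real ^ 'd \<Rightarrow> real"
    and gF :: "real ^ 'd \<Rightarrow> real ^ 'd"
    and K :: "(real ^ 'd) set"
    and L \<sigma> \<nu> :: real
    and x :: "real ^ 'd"
  assumes prob: "prob_space M"
    and f_int: "\<And>y. integrable M (f y)"
    and F_def: "\<And>y. F y = (\<integral>\<xi>. f y \<xi> \<partial>M)"
    and grad_f: "\<And>\<xi> y. \<xi> \<in> space M \<Longrightarrow> GDERIV (\<lambda>z. f z \<xi>) y :> gf \<xi> y"
    and lip: "\<And>\<xi> y z. \<xi> \<in> space M \<Longrightarrow> norm (gf \<xi> y - gf \<xi> z) \<le> L * norm (y - z)"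
    and gf_int: "\<And>y. integrable M (\<lambda>\<xi>. gf \<xi> y)"
    and grad_F: "\<And>y. GDERIV F y :> gF y"
    and unbiased: "\<And>y. (\<integral>\<xi>. gf \<xi> y \<partial>M) = gF y"
    and var: "\<And>y. y \<in> K \<Longrightarrow> (\<integral>\<^sup>+\<xi>. ennreal ((norm (gF y - gf \<xi> y))\<^sup>2) \<partial>M) \<le> ennreal (\<sigma>\<^sup>2)"
    and nu: "\<nu> > 0"
    and xK: "x \<in> K"
  shows "(\<integral>\<^sup>+\<xi>. ennreal (rad_expect (\<lambda>u.
            (linf_norm ((1 / \<nu>) *\<^sub>R ((f (x + \<nu> *\<^sub>R u) \<xi> - f x \<xi>) *\<^sub>R u)
               - rad_expect (\<lambda>v. (1 / \<nu>) *\<^sub>R ((F (x + \<nu> *\<^sub>R v) - F x) *\<^sub>R v))))\<^sup>2)) \<partial>M)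
         \<le> ennreal (3 * \<nu>\<^sup>2 * (real CARD('d))\<^sup>2 * L\<^sup>2 / 2 + 10 * (norm (gF x))\<^sup>2 + 8 * \<sigma>\<^sup>2)"
proof -
  interpret P: prob_space M by (rule prob)
  define d where "d = real CARD('d)"
  define X :: "'b \<times> (real^'d) \<Rightarrow> real" where "X = (\<lambda>w. (f (x + \<nu> *\<^sub>R snd w) (fst w) - f x (fst w)) / \<nu>)"
  define Ui :: "'d \<Rightarrow> 'b \<times> (real^'d) \<Rightarrow> real" where "Ui = (\<lambda>i w. snd w $ i)"
  interpret I: ipsp_U "VV M" "space M \<times> rad_vecs" "IP M" Ui UNIV
    unfolding Ui_def by (rule conc[OF prob])
  define b where "b = gF x"
  define A :: "'b \<times> (real^'d) \<Rightarrow> real" where "A = (\<lambda>w. gf (fst w) x \<bullet> snd w)"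
  define KK where "KK = L / 2 * \<nu> * d"
  have am: "(\<lambda>\<xi>. gf \<xi> x) \<in> borel_measurable M" using gf_int[of x] by (rule borel_measurable_integrable)
  have fm: "\<And>y. f y \<in> borel_measurable M" using f_int by (rule borel_measurable_integrable)
  have Em: "(\<lambda>\<xi>. (norm (b - gf \<xi> x))^2) \<in> borel_measurable M" unfolding b_def using am by measurable
  have Enn: "(\<integral>\<^sup>+\<xi>. ennreal ((norm (b - gf \<xi> x))^2) \<partial>M) \<le> ennreal (\<sigma>^2)" unfolding b_def by (rule var[OF xK])
  have Eint: "integrable M (\<lambda>\<xi>. (norm (b - gf \<xi> x))^2)"
    by (rule integrableI_nonneg[OF Em]) (use Enn in \<open>auto simp: top.not_eq_extremum intro: le_less_trans\<close>)
  have Ele: "(\<integral>\<xi>. (norm (b - gf \<xi> x))^2 \<partial>M) \<le> \<sigma>^2"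
  proof -
    have "ennreal (\<integral>\<xi>. (norm (b - gf \<xi> x))^2 \<partial>M) \<le> ennreal (\<sigma>^2)"
      using Enn nn_integral_eq_integral[OF Eint] by simp
    thus ?thesis by (simp add: ennreal_le_iff)
  qed
  have aint: "integrable M (\<lambda>\<xi>. (norm (gf \<xi> x))^2)"
  proof (rule sq_bound_int[where F = "\<lambda>\<xi>. 2 * (norm b)^2 + 2 * (norm (b - gf \<xi> x))^2"])
    show "integrable M (\<lambda>\<xi>. 2 * (norm b)^2 + 2 * (norm (b - gf \<xi> x))^2)"
      using Eint by simp
    show "(\<lambda>\<xi>. (norm (gf \<xi> x))^2) \<in> borel_measurable M" using am by measurable
    fix \<xi>
    have "norm (gf \<xi> x) \<le> norm b + norm (b - gf \<xi> x)" by (metis norm_triangle_sub add.commute norm_minus_commute)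
    hence "(norm (gf \<xi> x))^2 \<le> (norm b + norm (b - gf \<xi> x))^2" by (intro power_mono) auto
    also have "\<dots> \<le> 2 * (norm b)^2 + 2 * (norm (b - gf \<xi> x))^2"
    proof -
      have "0 \<le> (norm b - norm (b - gf \<xi> x))^2" by simp
      thus ?thesis by (simp add: power2_eq_square algebra_simps)
    qed
    finally show "\<bar>(norm (gf \<xi> x))^2\<bar> \<le> 2 * (norm b)^2 + 2 * (norm (b - gf \<xi> x))^2" by simp
  qed
  have a2: "(\<integral>\<xi>. (norm (gf \<xi> x))^2 \<partial>M) \<le> (norm b)^2 + \<sigma>^2"
  proof -
    have pw: "(norm (gf \<xi> x))^2 = (norm b)^2 - 2 * (b \<bullet> (b - gf \<xi> x)) + (norm (b - gf \<xi> x))^2" for \<xi>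
      by (simp add: power2_norm_eq_inner inner_diff_left inner_diff_right inner_commute)
    have dint: "integrable M (\<lambda>\<xi>. b - gf \<xi> x)" using gf_int[of x] by simp
    have iint: "integrable M (\<lambda>\<xi>. b \<bullet> (b - gf \<xi> x))" using dint by simp
    have "(\<integral>\<xi>. b - gf \<xi> x \<partial>M) = b - b"
      using unbiased[of x] dint gf_int[of x] by (simp add: b_def P.prob_space)
    hence z: "(\<integral>\<xi>. b \<bullet> (b - gf \<xi> x) \<partial>M) = 0" using dint by simp
    have "(\<integral>\<xi>. (norm (gf \<xi> x))^2 \<partial>M) = (\<integral>\<xi>. (norm b)^2 - 2 * (b \<bullet> (b - gf \<xi> x)) + (norm (b - gf \<xi> x))^2 \<partial>M)"
      by (simp only: pw)
    also have "\<dots> = (norm b)^2 - 2 * (\<integral>\<xi>. b \<bullet> (b - gf \<xi> x) \<partial>M) + (\<integral>\<xi>. (norm (b - gf \<xi> x))^2 \<partial>M)"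
      using iint Eint by (simp add: P.prob_space)
    also have "\<dots> \<le> (norm b)^2 + \<sigma>^2" using z Ele by simp
    finally show ?thesis .
  qed
  have AV: "A \<in> VV M" unfolding VV_def
  proof (intro CollectI ballI conjI)
    fix u :: "real^'d" assume u: "u \<in> rad_vecs"
    show m: "(\<lambda>\<xi>. A (\<xi>, u)) \<in> borel_measurable M" unfolding A_def using am by simp
    show "integrable M (\<lambda>\<xi>. (A (\<xi>, u))^2)"
    proof (rule sq_bound_int[where F = "\<lambda>\<xi>. d * (norm (gf \<xi> x))^2"])
      show "integrable M (\<lambda>\<xi>. d * (norm (gf \<xi> x))^2)" using aint by simp
      show "(\<lambda>\<xi>. (A (\<xi>, u))^2) \<in> borel_measurable M" using m by simp
      fix \<xi>
      have "\<bar>A (\<xi>, u)\<bar> \<le> norm (gf \<xi> x) * norm u" unfolding A_def by (simp add: Cauchy_Schwarz_ineq2)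
      hence "(A (\<xi>, u))^2 \<le> (norm (gf \<xi> x) * norm u)^2"
        by (metis abs_le_square_iff abs_of_nonneg norm_ge_zero mult_nonneg_nonneg)
      also have "\<dots> = d * (norm (gf \<xi> x))^2" using rad_norm_sq[OF u] unfolding d_def by (simp add: power_mult_distrib)
      finally show "\<bar>(A (\<xi>, u))^2\<bar> \<le> d * (norm (gf \<xi> x))^2" by simp
    qed
  qed
  have XA: "\<bar>X (\<xi>, u) - A (\<xi>, u)\<bar> \<le> KK" if x: "\<xi> \<in> space M" and u: "u \<in> rad_vecs" for \<xi> u
  proof -
    have "\<bar>f (x + \<nu> *\<^sub>R u) \<xi> - f x \<xi> - gf \<xi> x \<bullet> (\<nu> *\<^sub>R u)\<bar> \<le> L / 2 * (norm (\<nu> *\<^sub>R u))^2"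
      by (rule taylor_bound[where g = "\<lambda>z. f z \<xi>" and G = "gf \<xi>"]) (use grad_f lip x in auto)
    also have "\<dots> = L / 2 * \<nu>^2 * d" using rad_norm_sq[OF u] nu unfolding d_def by (simp add: power_mult_distrib)
    finally have h: "\<bar>f (x + \<nu> *\<^sub>R u) \<xi> - f x \<xi> - \<nu> * (gf \<xi> x \<bullet> u)\<bar> \<le> L / 2 * \<nu>^2 * d" by simp
    have "X (\<xi>, u) - A (\<xi>, u) = (f (x + \<nu> *\<^sub>R u) \<xi> - f x \<xi> - \<nu> * (gf \<xi> x \<bullet> u)) / \<nu>"
      unfolding X_def A_def using nu by (simp add: field_simps)
    hence "\<bar>X (\<xi>, u) - A (\<xi>, u)\<bar> = \<bar>f (x + \<nu> *\<^sub>R u) \<xi> - f x \<xi> - \<nu> * (gf \<xi> x \<bullet> u)\<bar> / \<nu>"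
      using nu by simp
    also have "\<dots> \<le> (L / 2 * \<nu>^2 * d) / \<nu>" using h nu by (intro divide_right_mono) auto
    also have "\<dots> = KK" unfolding KK_def using nu by (simp add: power2_eq_square)
    finally show ?thesis .
  qed
  have Xbound: "(X (\<xi>, u))^2 \<le> 30/13 * (A (\<xi>, u))^2 + 30/17 * KK^2" if "\<xi> \<in> space M" "u \<in> rad_vecs" for \<xi> u
    by (rule sq_split[OF XA[OF that]])
  have XV: "X \<in> VV M" unfolding VV_def
  proof (intro CollectI ballI conjI)
    fix u :: "real^'d" assume u: "u \<in> rad_vecs"
    show m: "(\<lambda>\<xi>. X (\<xi>, u)) \<in> borel_measurable M" unfolding X_def using fm by simp
    show "integrable M (\<lambda>\<xi>. (X (\<xi>, u))^2)"
    proof (rule sq_bound_int[where F = "\<lambda>\<xi>. 30/13 * (A (\<xi>, u))^2 + 30/17 * KK^2"])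
      show "integrable M (\<lambda>\<xi>. 30/13 * (A (\<xi>, u))^2 + 30/17 * KK^2)"
        using VV_D(2)[OF AV u] by simp
      show "(\<lambda>\<xi>. (X (\<xi>, u))^2) \<in> borel_measurable M" using m by simp
      fix \<xi> assume "\<xi> \<in> space M"
      thus "\<bar>(X (\<xi>, u))^2\<bar> \<le> 30/13 * (A (\<xi>, u))^2 + 30/17 * KK^2" using Xbound u by simp
    qed
  qed
  have IPX: "IP M X X \<le> 30/13 * ((norm b)^2 + \<sigma>^2) + 30/17 * KK^2"
  proof -
    have "IP M X X \<le> rad_expect (\<lambda>u. \<integral>\<xi>. 30/13 * (A (\<xi>, u))^2 + 30/17 * KK^2 \<partial>M)"
      unfolding IP_def
    proof (rule rad_expect_mono)
      fix u :: "real^'d" assume u: "u \<in> rad_vecs"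
      show "(\<integral>\<xi>. X (\<xi>, u) * X (\<xi>, u) \<partial>M) \<le> (\<integral>\<xi>. 30/13 * (A (\<xi>, u))^2 + 30/17 * KK^2 \<partial>M)"
        using VV_prod_int[OF XV XV u] VV_D(2)[OF AV u] Xbound[OF _ u]
        by (intro integral_mono) (auto simp: power2_eq_square)
    qed
    also have "\<dots> = rad_expect (\<lambda>u. 30/13 * (\<integral>\<xi>. (A (\<xi>, u))^2 \<partial>M) + 30/17 * KK^2)"
      using VV_D(2)[OF AV] by (intro rad_expect_cong) (simp add: P.prob_space)
    also have "\<dots> = 30/13 * rad_expect (\<lambda>u. \<integral>\<xi>. (A (\<xi>, u))^2 \<partial>M) + 30/17 * KK^2"
      by (simp only: rad_expect_add rad_expect_mult rad_expect_const)
    also have "rad_expect (\<lambda>u. \<integral>\<xi>. (A (\<xi>, u))^2 \<partial>M) = (\<integral>\<xi>. rad_expect (\<lambda>u. (A (\<xi>, u))^2) \<partial>M)"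
      using int_rad(2)[of M "\<lambda>\<xi> u. (A (\<xi>, u))^2"] VV_D(2)[OF AV] by simp
    also have "\<dots> = (\<integral>\<xi>. (norm (gf \<xi> x))^2 \<partial>M)" unfolding A_def by (simp add: rad_sq_inner)
    finally have "IP M X X \<le> 30/13 * (\<integral>\<xi>. (norm (gf \<xi> x))^2 \<partial>M) + 30/17 * KK^2" .
    moreover have "30/13 * (\<integral>\<xi>. (norm (gf \<xi> x))^2 \<partial>M) \<le> 30/13 * ((norm b)^2 + \<sigma>^2)"
      using a2 by (intro mult_left_mono) auto
    ultimately show ?thesis by linarith
  qed
  have TV: "I.TT X \<in> VV M" by (rule I.TT_V[OF XV])
  have key: "IP M (I.TT X) (I.TT X) \<le> 17/5 * IP M X X" by (rule I.key_ind[OF XV refl])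
  have Gi: "rad_expect (\<lambda>v. (1 / \<nu>) *\<^sub>R ((F (x + \<nu> *\<^sub>R v) - F x) *\<^sub>R v)) $ i = IP M (Ui i) X" for i
  proof -
    have "rad_expect (\<lambda>v. (1 / \<nu>) *\<^sub>R ((F (x + \<nu> *\<^sub>R v) - F x) *\<^sub>R v)) $ i
        = rad_expect (\<lambda>v::real^'d. (1 / \<nu>) * ((F (x + \<nu> *\<^sub>R v) - F x) * v $ i))"
      by (simp add: rad_expect_component)
    also have "\<dots> = IP M (Ui i) X" unfolding IP_def Ui_def X_def
      by (intro rad_expect_cong) (simp add: F_def f_int field_simps)
    finally show ?thesis .
  qed
  define G where "G = rad_expect (\<lambda>v. (1 / \<nu>) *\<^sub>R ((F (x + \<nu> *\<^sub>R v) - F x) *\<^sub>R v))"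
  have Gi': "G $ i = IP M (Ui i) X" for i unfolding G_def by (rule Gi)
  have integrand: "linf_norm ((1 / \<nu>) *\<^sub>R ((f (x + \<nu> *\<^sub>R u) \<xi> - f x \<xi>) *\<^sub>R u)
               - rad_expect (\<lambda>v. (1 / \<nu>) *\<^sub>R ((F (x + \<nu> *\<^sub>R v) - F x) *\<^sub>R v))) = I.TT X (\<xi>, u)" for \<xi> u
    unfolding G_def[symmetric] linf_norm_def I.TT_def
  proof (intro arg_cong[where f = Max] image_cong refl)
    fix i
    have "((1 / \<nu>) *\<^sub>R ((f (x + \<nu> *\<^sub>R u) \<xi> - f x \<xi>) *\<^sub>R u) - G) $ i
        = (1 / \<nu>) * ((f (x + \<nu> *\<^sub>R u) \<xi> - f x \<xi>) * u $ i) - G $ i" by simp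
    also have "\<dots> = Ui i (\<xi>, u) * X (\<xi>, u) - IP M (Ui i) X" unfolding Gi' Ui_def X_def by simp
    finally show "\<bar>((1 / \<nu>) *\<^sub>R ((f (x + \<nu> *\<^sub>R u) \<xi> - f x \<xi>) *\<^sub>R u) - G) $ i\<bar>
        = \<bar>Ui i (\<xi>, u) * X (\<xi>, u) - IP M (Ui i) X\<bar>" by simp
  qed
  have Tint: "\<And>u. u \<in> rad_vecs \<Longrightarrow> integrable M (\<lambda>\<xi>. (I.TT X (\<xi>, u))^2)" using VV_D(2)[OF TV] .
  have "(\<integral>\<^sup>+\<xi>. ennreal (rad_expect (\<lambda>u. (linf_norm ((1 / \<nu>) *\<^sub>R ((f (x + \<nu> *\<^sub>R u) \<xi> - f x \<xi>) *\<^sub>R u)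
               - rad_expect (\<lambda>v. (1 / \<nu>) *\<^sub>R ((F (x + \<nu> *\<^sub>R v) - F x) *\<^sub>R v))))\<^sup>2)) \<partial>M)
      = (\<integral>\<^sup>+\<xi>. ennreal (rad_expect (\<lambda>u. (I.TT X (\<xi>, u))^2)) \<partial>M)"
    by (simp only: integrand)
  also have "\<dots> = ennreal (\<integral>\<xi>. rad_expect (\<lambda>u. (I.TT X (\<xi>, u))^2) \<partial>M)"
  proof (rule nn_integral_eq_integral)
    show "integrable M (\<lambda>\<xi>. rad_expect (\<lambda>u. (I.TT X (\<xi>, u))^2))" by (rule int_rad(1)[OF Tint])
    show "AE \<xi> in M. 0 \<le> rad_expect (\<lambda>u. (I.TT X (\<xi>, u))^2)"
      by (intro AE_I2) (simp add: rad_expect_real sum_nonneg)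
  qed
  also have "(\<integral>\<xi>. rad_expect (\<lambda>u. (I.TT X (\<xi>, u))^2) \<partial>M) = IP M (I.TT X) (I.TT X)"
  proof -
    have "(\<integral>\<xi>. rad_expect (\<lambda>u. (I.TT X (\<xi>, u))^2) \<partial>M) = rad_expect (\<lambda>u. \<integral>\<xi>. (I.TT X (\<xi>, u))^2 \<partial>M)"
      by (rule int_rad(2)[OF Tint])
    thus ?thesis unfolding IP_def by (simp add: power2_eq_square)
  qed
  also have "ennreal (IP M (I.TT X) (I.TT X)) \<le> ennreal (3 * \<nu>\<^sup>2 * (real CARD('d))\<^sup>2 * L\<^sup>2 / 2 + 10 * (norm (gF x))\<^sup>2 + 8 * \<sigma>\<^sup>2)"
  proof (rule ennreal_leI)
    have "IP M (I.TT X) (I.TT X) \<le> 17/5 * (30/13 * ((norm b)^2 + \<sigma>^2) + 30/17 * KK^2)"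
      using order_trans[OF key mult_left_mono[OF IPX, of "17/5"]] by simp
    also have "\<dots> = 102/13 * (norm b)^2 + 102/13 * \<sigma>^2 + 6 * KK^2" by (simp add: algebra_simps)
    also have "6 * KK^2 = 3 * \<nu>\<^sup>2 * (real CARD('d))\<^sup>2 * L\<^sup>2 / 2" unfolding KK_def d_def
      by (simp add: power_mult_distrib power_divide)
    also have "102/13 * (norm b)^2 + 102/13 * \<sigma>^2 + 3 * \<nu>\<^sup>2 * (real CARD('d))\<^sup>2 * L\<^sup>2 / 2
        \<le> 3 * \<nu>\<^sup>2 * (real CARD('d))\<^sup>2 * L\<^sup>2 / 2 + 10 * (norm (gF x))\<^sup>2 + 8 * \<sigma>\<^sup>2"
      unfolding b_def using zero_le_power2[of "norm (gF x)"] zero_le_power2[of \<sigma>] by linarith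
    finally show "IP M (I.TT X) (I.TT X) \<le> 3 * \<nu>\<^sup>2 * (real CARD('d))\<^sup>2 * L\<^sup>2 / 2 + 10 * (norm (gF x))\<^sup>2 + 8 * \<sigma>\<^sup>2" .
  qed
  finally show ?thesis .
qed


end
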